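(* For every finite set $X$ of proposals with $m=|X|\geq 3$, the rank-variance DSF $\Delta_{\mathit{var}}$ violates Uniform Reinforcement; that is, there exist a profile $R:N\to X!$ and a perfectly uniform profile $R^U:N'\to X!$ with $N\cap N'=\emptyset$ such that $\Delta_{\mathit{var}}(R)\neq\Delta_{\mathit{var}}(R\oplus R^U)$.
   Context: $X!$ is the set of strict linear orders on $X$. A profile is a function $R:N\to X!$ with $N\subset\mathbb{N}$ finite and nonempty. $\mathit{pos}^R_i(x)=1+|\{y: y \text{ ranked above } x \text{ by } R(i)\}|$. The rank-variance DSF is $\Delta_{\mathit{var}}(R)=\arg\max_{x\in X}\frac{1}{|N|}\sum_{i\in N}(\mathit{pos}^R_i(x)-\mu^R(x))^2$ where $\mu^R(x)=\frac{1}{|N|}\sum_{i\in N}\mathit{pos}^R_i(x)$. A profile is perfectly uniform if each of the $m!$ linear orders on $X$ is reported by the same number of agents. For profiles $R:N\to X!$, $R':N'\to X!$ with $N\cap N'=\emptyset$, $R\oplus R'$ is the profile on $N\cup N'$ agreeing with $R$ on $N$ and $R'$ on $N'$. A DSF $\Delta$ satisfies Uniform Reinforcement if $\Delta(R)=\Delta(R\oplus R^U)$ for every profile $R:N\to X!$ and every perfectly uniform profile $R^U:N'\to X!$ with $N\cap N'=\emptyset$. *)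

theory Defs
  imports Complex_Main
begin

text \<open>Strict linear orders on X, as relations (x, y) meaning "x is ranked above y".\<close>
definition lin_orders :: "'a set \<Rightarrow> 'a rel set" where
  "lin_orders X = {r. r \<subseteq> X \<times> X \<and> irrefl r \<and> trans r \<and> total_on X r}"

definition is_profile :: "'a set \<Rightarrow> nat set \<Rightarrow> (nat \<Rightarrow> 'a rel) \<Rightarrow> bool" where
  "is_profile X N R \<longleftrightarrow> finite N \<and> N \<noteq> {} \<and> (\<forall>i\<in>N. R i \<in> lin_orders X)"

definition pos :: "'a set \<Rightarrow> (nat \<Rightarrow> 'a rel) \<Rightarrow> nat \<Rightarrow> 'a \<Rightarrow> nat" where
  "pos X R i x = 1 + card {y \<in> X. (y, x) \<in> R i}"

definition mean_pos :: "'a set \<Rightarrow> nat set \<Rightarrow> (nat \<Rightarrow> 'a rel) \<Rightarrow> 'a \<Rightarrow> real" where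
  "mean_pos X N R x = (\<Sum>i\<in>N. real (pos X R i x)) / real (card N)"

definition rank_var :: "'a set \<Rightarrow> nat set \<Rightarrow> (nat \<Rightarrow> 'a rel) \<Rightarrow> 'a \<Rightarrow> real" where
  "rank_var X N R x = (\<Sum>i\<in>N. (real (pos X R i x) - mean_pos X N R x)\<^sup>2) / real (card N)"

definition Delta_var :: "'a set \<Rightarrow> nat set \<Rightarrow> (nat \<Rightarrow> 'a rel) \<Rightarrow> 'a set" where
  "Delta_var X N R = {x \<in> X. \<forall>y\<in>X. rank_var X N R y \<le> rank_var X N R x}"

definition perfectly_uniform :: "'a set \<Rightarrow> nat set \<Rightarrow> (nat \<Rightarrow> 'a rel) \<Rightarrow> bool" where
  "perfectly_uniform X N R \<longleftrightarrow>
     (\<exists>k. \<forall>r\<in>lin_orders X. card {i \<in> N. R i = r} = k)"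

definition combine :: "nat set \<Rightarrow> (nat \<Rightarrow> 'a rel) \<Rightarrow> (nat \<Rightarrow> 'a rel) \<Rightarrow> (nat \<Rightarrow> 'a rel)" where
  "combine N R R' = (\<lambda>i. if i \<in> N then R i else R' i)"

end

theory Submission
  imports Defs
begin

definition ford :: "('a \<Rightarrow> nat) \<Rightarrow> 'a set \<Rightarrow> 'a rel" where
  "ford f X = {(x,y). x \<in> X \<and> y \<in> X \<and> f x < f y}"

definition pp :: "'a set \<Rightarrow> 'a rel \<Rightarrow> 'a \<Rightarrow> real" where
  "pp X s x = real (1 + card {y \<in> X. (y, x) \<in> s})"

lemma ford_lin: "inj_on f X \<Longrightarrow> ford f X \<in> lin_orders X"
  unfolding lin_orders_def irrefl_def trans_def total_on_def ford_def
  by (auto simp: nat_neq_iff) (metis inj_onD linorder_neqE_nat)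

lemma pp_ford: "x \<in> X \<Longrightarrow> pp X (ford f X) x = real (1 + card {y \<in> X. f y < f x})"
  unfolding pp_def ford_def by (simp add: conj_commute)

lemma pos_pp: "real (pos X R i x) = pp X (R i) x"
  unfolding pos_def pp_def by simp

lemma lin_pp_sum:
  assumes "finite X" "s \<in> lin_orders X" "a \<in> X" "b \<in> X" "a \<noteq> b"
  shows "pp X s a + pp X s b \<ge> 3"
proof -
  have "total_on X s" using assms(2) unfolding lin_orders_def by simp
  then have tot: "(a,b) \<in> s \<or> (b,a) \<in> s" using assms(3,4,5) unfolding total_on_def by blast
  have g: "pp X s y \<ge> 2" if "(z,y) \<in> s" "z \<in> X" for z y
  proof -
    have "z \<in> {w \<in> X. (w, y) \<in> s}" using that by simp
    moreover have "finite {w \<in> X. (w, y) \<in> s}" using assms(1) by simp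
    ultimately have "card {w \<in> X. (w, y) \<in> s} > 0" using card_gt_0_iff by blast
    then show ?thesis unfolding pp_def by simp
  qed
  have h1: "pp X s y \<ge> 1" for y unfolding pp_def by simp
  show ?thesis
  proof (cases "(a,b) \<in> s")
    case True
    then have "pp X s b \<ge> 2" using g assms by blast
    then show ?thesis using h1[of a] by linarith
  next
    case False
    then have "(b,a) \<in> s" using tot by blast
    then have "pp X s a \<ge> 2" using g assms by blast
    then show ?thesis using h1[of b] by linarith
  qed
qed

lemma var_alt:
  fixes f :: "nat \<Rightarrow> real"
  assumes "finite N" "N \<noteq> {}"
  shows "(\<Sum>i\<in>N. (f i - (\<Sum>j\<in>N. f j) / real (card N))\<^sup>2) / real (card N)
       = (\<Sum>i\<in>N. (f i)\<^sup>2) / real (card N) - ((\<Sum>j\<in>N. f j) / real (card N))\<^sup>2"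
proof -
  define n where "n = real (card N)"
  define S where "S = (\<Sum>j\<in>N. f j)"
  have n0: "n > 0" using assms unfolding n_def by (simp add: card_gt_0_iff)
  have "(\<Sum>i\<in>N. (f i - S / n)\<^sup>2) = (\<Sum>i\<in>N. (f i)\<^sup>2 - 2 * (S/n) * f i + (S/n)\<^sup>2)"
    by (rule sum.cong[OF refl]) (simp add: power2_diff)
  also have "\<dots> = (\<Sum>i\<in>N. (f i)\<^sup>2) - (\<Sum>i\<in>N. 2 * (S/n) * f i) + (\<Sum>i\<in>N. (S/n)\<^sup>2)"
    by (simp only: sum.distrib sum_subtractf)
  also have "(\<Sum>i\<in>N. 2 * (S/n) * f i) = 2 * (S/n) * S"
    unfolding S_def by (rule sum_distrib_left[symmetric])
  also have "(\<Sum>i\<in>N. (S/n)\<^sup>2) = n * (S/n)\<^sup>2"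
    unfolding n_def by simp
  finally have "(\<Sum>i\<in>N. (f i - S / n)\<^sup>2) = (\<Sum>i\<in>N. (f i)\<^sup>2) - 2 * (S/n) * S + n * (S/n)\<^sup>2" .
  then have "(\<Sum>i\<in>N. (f i - S / n)\<^sup>2) / n = (\<Sum>i\<in>N. (f i)\<^sup>2) / n - (S/n)\<^sup>2"
    using n0 by (simp add: field_simps power2_eq_square)
  then show ?thesis by (simp add: S_def n_def)
qed

lemma rank_var_alt:
  assumes "finite N" "N \<noteq> {}"
  shows "rank_var X N R x = (\<Sum>i\<in>N. (pp X (R i) x)\<^sup>2) / real (card N)
           - ((\<Sum>i\<in>N. pp X (R i) x) / real (card N))\<^sup>2"
  unfolding rank_var_def mean_pos_def pos_pp using var_alt[OF assms] by simp


lemma pp_ge1: "pp X s x \<ge> 1" unfolding pp_def by simp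

theorem proposition3:
  fixes X :: "'a set"
  assumes "finite X" and "card X \<ge> 3"
  shows "\<exists>N R N' RU.
           is_profile X N R \<and> is_profile X N' RU \<and> perfectly_uniform X N' RU \<and>
           N \<inter> N' = {} \<and>
           Delta_var X N R \<noteq> Delta_var X (N \<union> N') (combine N R RU)"
proof (rule ccontr)
  assume H: "\<not> ?thesis"
  have fin: "finite X" by fact
  have H': "Delta_var X N R = Delta_var X (N \<union> N') (combine N R RU)"
    if "is_profile X N R" "is_profile X N' RU" "perfectly_uniform X N' RU" "N \<inter> N' = {}"
    for N R N' RU using H that by blast
  obtain a where a: "a \<in> X" using assms(2) by (metis card.empty ex_in_conv not_numeral_le_zero)
  have "card (X - {a}) \<ge> 2" using assms a by (simp add: card_Diff_singleton)
  then obtain b where b: "b \<in> X - {a}" by (metis card.empty ex_in_conv not_numeral_le_zero)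
  have "card (X - {a} - {b}) \<ge> 1" using \<open>card (X - {a}) \<ge> 2\<close> b fin by (simp add: card_Diff_singleton)
  then obtain c where c: "c \<in> X - {a} - {b}" by (metis card.empty ex_in_conv not_one_le_zero)
  have abc: "a \<in> X" "b \<in> X" "c \<in> X" "a \<noteq> b" "a \<noteq> c" "b \<noteq> c" using a b c by auto
  obtain g :: "'a \<Rightarrow> nat" and n0 where g: "inj_on g X" using finite_imp_inj_to_nat_seg[OF fin] by blast
  define f1 where "f1 = (\<lambda>x. if x = a then 0 else if x = b then 1 else g x + 2)"
  define f2 where "f2 = (\<lambda>x. if x = b then 0 else if x = a then 1 else g x + 2)"
  define f3 where "f3 = (\<lambda>x. if x = c then 0 else g x + 1)"
  have i1: "inj_on f1 X" using g unfolding inj_on_def f1_def by auto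
  have i2: "inj_on f2 X" using g unfolding inj_on_def f2_def by auto
  have i3: "inj_on f3 X" using g unfolding inj_on_def f3_def by auto
  define r1 where "r1 = ford f1 X"
  define r2 where "r2 = ford f2 X"
  define r3 where "r3 = ford f3 X"
  define L where "L = lin_orders X"
  have r1L: "r1 \<in> L" and r2L: "r2 \<in> L" and r3L: "r3 \<in> L"
    using ford_lin[OF i1] ford_lin[OF i2] ford_lin[OF i3] r1_def r2_def r3_def L_def by auto
  have "L \<subseteq> Pow (X \<times> X)" unfolding L_def lin_orders_def by auto
  then have finL: "finite L" using fin by (meson finite_Pow_iff finite_SigmaI finite_subset)
  obtain ls where ls: "set ls = L" "distinct ls" using finite_distinct_list[OF finL] by blast
  define u where "u = length ls"
  have u0: "u > 0" using r1L ls u_def by (metis empty_iff length_greater_0_conv set_empty)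
  define N' where "N' = Suc ` {..<u}"
  define RU where "RU = (\<lambda>i. ls ! (i - 1))"
  have lsL: "ls ! j \<in> lin_orders X" if "j < u" for j
    using that ls(1) L_def u_def nth_mem by metis
  have profU: "is_profile X N' RU"
    unfolding is_profile_def N'_def RU_def using u0 lsL by auto
  have unif: "perfectly_uniform X N' RU"
  proof -
  have "\<forall>r\<in>lin_orders X. card {i \<in> N'. RU i = r} = 1"
  proof
    fix r assume "r \<in> lin_orders X"
    then have "r \<in> set ls" using ls L_def by simp
    then obtain j where j: "j < u" "ls ! j = r" using u_def by (metis in_set_conv_nth)
    have "{i \<in> N'. RU i = r} = {Suc j}"
      using j ls(2) u_def unfolding N'_def RU_def by (auto simp: nth_eq_iff_index_eq)
    then show "card {i \<in> N'. RU i = r} = 1" by simp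
  qed
  then show ?thesis unfolding perfectly_uniform_def by blast
  qed
  have disj: "{0} \<inter> N' = {}" unfolding N'_def by auto
  have cardU: "card ({0} \<union> N') = u + 1"
    unfolding N'_def by (simp add: card_image)
  have sumU: "(\<Sum>i\<in>{0} \<union> N'. h (combine {0} (\<lambda>_. r) RU i)) = h r + (\<Sum>s\<in>L. h s)"
    for h :: "'a rel \<Rightarrow> real" and r
  proof -
    have "(\<Sum>i\<in>{0} \<union> N'. h (combine {0} (\<lambda>_. r) RU i))
        = h r + (\<Sum>i\<in>N'. h (combine {0} (\<lambda>_. r) RU i))"
      using disj unfolding N'_def by (simp add: combine_def)
    also have "(\<Sum>i\<in>N'. h (combine {0} (\<lambda>_. r) RU i)) = (\<Sum>j<u. h (ls ! j))"
      unfolding N'_def by (simp add: sum.reindex combine_def RU_def)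
    also have "\<dots> = sum_list (map h ls)"
      unfolding u_def by (simp add: sum_list_sum_nth atLeast0LessThan)
    also have "\<dots> = (\<Sum>s\<in>L. h s)" using ls by (simp add: sum_list_distinct_conv_sum_set)
    finally show ?thesis .
  qed
  define P where "P = (\<lambda>x. \<Sum>s\<in>L. pp X s x)"
  define Q where "Q = (\<lambda>x. \<Sum>s\<in>L. (pp X s x)\<^sup>2)"
  have rv: "rank_var X ({0} \<union> N') (combine {0} (\<lambda>_. r) RU) x
      = ((pp X r x)\<^sup>2 + Q x) / real (u+1) - ((pp X r x + P x) / real (u+1))\<^sup>2" for r x
  proof -
    have "finite ({0} \<union> N')" "{0} \<union> N' \<noteq> {}" unfolding N'_def by auto
    note E = rank_var_alt[OF this, of X "combine {0} (\<lambda>_. r) RU" x]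
    show ?thesis
      unfolding E sumU[of "\<lambda>s. (pp X s x)\<^sup>2" r] sumU[of "\<lambda>s. pp X s x" r] cardU
      unfolding P_def Q_def by simp
  qed
  have eq: "rank_var X ({0} \<union> N') (combine {0} (\<lambda>_. r) RU) a
          = rank_var X ({0} \<union> N') (combine {0} (\<lambda>_. r) RU) b" if "r \<in> L" for r
  proof -
    have p1: "is_profile X {0} (\<lambda>_. r)" using that L_def unfolding is_profile_def by auto
    have D1: "Delta_var X {0} (\<lambda>_. r) = X"
      unfolding Delta_var_def rank_var_def mean_pos_def by simp
    have "Delta_var X ({0} \<union> N') (combine {0} (\<lambda>_. r) RU) = X"
      using H'[OF p1 profU unif disj] D1 by simp
    then have "a \<in> Delta_var X ({0} \<union> N') (combine {0} (\<lambda>_. r) RU)"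
              "b \<in> Delta_var X ({0} \<union> N') (combine {0} (\<lambda>_. r) RU)" using abc by auto
    then have "\<forall>y\<in>X. rank_var X ({0} \<union> N') (combine {0} (\<lambda>_. r) RU) y \<le> rank_var X ({0} \<union> N') (combine {0} (\<lambda>_. r) RU) a"
       "\<forall>y\<in>X. rank_var X ({0} \<union> N') (combine {0} (\<lambda>_. r) RU) y \<le> rank_var X ({0} \<union> N') (combine {0} (\<lambda>_. r) RU) b"
      unfolding Delta_var_def by blast+
    then show ?thesis using abc(1,2) by (meson order_antisym)
  qed
  have pr1a: "pp X r1 a = 1" unfolding r1_def using pp_ford[OF abc(1)] f1_def by simp
  have "{y \<in> X. f1 y < f1 b} = {a}" using abc unfolding f1_def by auto
  then have pr1b: "pp X r1 b = 2" unfolding r1_def using pp_ford[OF abc(2)] by simp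
  have pr2b: "pp X r2 b = 1" unfolding r2_def using pp_ford[OF abc(2)] f2_def by simp
  have "{y \<in> X. f2 y < f2 a} = {b}" using abc unfolding f2_def by auto
  then have pr2a: "pp X r2 a = 2" unfolding r2_def using pp_ford[OF abc(1)] by simp
  have e1: "(1 + Q a) / real (u+1) - ((1 + P a) / real (u+1))\<^sup>2
          = (4 + Q b) / real (u+1) - ((2 + P b) / real (u+1))\<^sup>2"
    using eq[OF r1L] rv[of r1] pr1a pr1b by simp
  have e2: "(4 + Q a) / real (u+1) - ((2 + P a) / real (u+1))\<^sup>2
          = (1 + Q b) / real (u+1) - ((1 + P b) / real (u+1))\<^sup>2"
    using eq[OF r2L] rv[of r2] pr2a pr2b by simp
  have PP: "P a + P b = 3 * real u"
  proof -
    define n where "n = real (u+1)"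
    have n0: "n > 0" unfolding n_def by simp
    have "(1 + Q a) * n - (1 + P a)^2 = (4 + Q b) * n - (2 + P b)^2"
    proof -
      have "n * ((1 + Q a) * n - (1 + P a)^2) = n * ((4 + Q b) * n - (2 + P b)^2)"
        using e1 n0 unfolding n_def[symmetric] by (simp add: field_simps power2_eq_square)
      then show ?thesis using n0 by simp
    qed
    moreover have "(4 + Q a) * n - (2 + P a)^2 = (1 + Q b) * n - (1 + P b)^2"
    proof -
      have "n * ((4 + Q a) * n - (2 + P a)^2) = n * ((1 + Q b) * n - (1 + P b)^2)"
        using e2 n0 unfolding n_def[symmetric] by (simp add: field_simps power2_eq_square)
      then show ?thesis using n0 by simp
    qed
    ultimately have "P a + P b = 3 * n - 3" by (simp add: power2_eq_square algebra_simps)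
    then show ?thesis unfolding n_def by simp
  qed
  have "(\<Sum>s\<in>L. (3::real)) < (\<Sum>s\<in>L. pp X s a + pp X s b)"
  proof (rule sum_strict_mono_ex1[OF finL])
    show "\<forall>s\<in>L. 3 \<le> pp X s a + pp X s b" using lin_pp_sum[OF fin] abc L_def by blast
    have "c \<in> {y \<in> X. f3 y < f3 a}" "c \<in> {y \<in> X. f3 y < f3 b}"
      using abc unfolding f3_def by auto
    moreover have "finite {y \<in> X. f3 y < f3 a}" "finite {y \<in> X. f3 y < f3 b}" using fin by simp_all
    ultimately have "card {y \<in> X. f3 y < f3 a} > 0" "card {y \<in> X. f3 y < f3 b} > 0"
      using card_gt_0_iff by blast+
    then have "pp X r3 a \<ge> 2" "pp X r3 b \<ge> 2" unfolding r3_def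
      using pp_ford[OF abc(1)] pp_ford[OF abc(2)] by simp_all
    then show "\<exists>s\<in>L. 3 < pp X s a + pp X s b" using r3L by force
  qed
  then have "3 * real u < P a + P b"
    unfolding P_def using distinct_card[OF ls(2), unfolded ls(1)] u_def by (simp add: sum.distrib)
  then show False using PP by simp
qed

end
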